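(* For every natural number $n$ and all annotated terms $g,d$: if $\mathrm{decide}(n,g,d)=\mathrm{true}$, then the sequent $(g,d)$ is derivable in the orthologic sequent calculus $\mathcal{P}$.
   Context: Terms are generated by the grammar $t ::= \mathrm{Var}(k) \mid \mathrm{Meet}(t,t) \mid \mathrm{Join}(t,t) \mid \mathrm{Not}(t)$, where $k$ ranges over positive integers. An annotated term is either $N$, $L\,t$ or $R\,t$ for a term $t$. A sequent is an ordered pair of annotated terms. The proof system $\mathcal{P}$: the derivable sequents form the least set of sequents closed under the following rules, where $\gamma,\delta$ are arbitrary annotated terms and $a,b$ are terms. - Hyp: $(L\,a,R\,a)$. - Weaken: from $(\gamma,N)$ infer $(\gamma,\delta)$. - Contract: from $(\gamma,\gamma)$ infer $(\gamma,N)$. - Swap: from $(\gamma,\delta)$ infer $(\delta,\gamma)$. - LeftAnd1 and LeftAnd2: from $(\gamma,L\,a)$, respectively from $(\gamma,L\,b)$, infer $(\gamma,L\,\mathrm{Meet}(a,b))$. - LeftOr: from $(\gamma,L\,a)$ and $(\gamma,L\,b)$ infer $(\gamma,L\,\mathrm{Join}(a,b))$. - LeftNot: from $(\gamma,R\,a)$ infer $(\gamma,L\,\mathrm{Not}(a))$. - RightAnd: from $(\gamma,R\,a)$ and $(\gamma,R\,b)$ infer $(\gamma,R\,\mathrm{Meet}(a,b))$. - RightOr1 and RightOr2: from $(\gamma,R\,a)$, respectively from $(\gamma,R\,b)$, infer $(\gamma,R\,\mathrm{Join}(a,b))$. - RightNot: from $(\gamma,L\,a)$ infer $(\gamma,R\,\mathrm{Not}(a))$.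 - Cut: from $(\gamma,R\,b)$ and $(L\,b,\delta)$ infer $(\gamma,\delta)$. The fuel-bounded proof-search function $\mathrm{decide}:\mathbb{N}\times\mathrm{AnTerm}\times\mathrm{AnTerm}\to\{\mathrm{true},\mathrm{false}\}$ is defined recursively. First, $\mathrm{decide}(0,g,d)=\mathrm{false}$. Second, $\mathrm{decide}(n+1,g,d)=\mathrm{true}$ iff at least one of the following holds, where every recursive call uses fuel $n$: - $g=L\,\mathrm{Var}(a)$ and $d=R\,\mathrm{Var}(a)$ for the same $a$; - $\mathrm{decide}(n,g,N)$; - $d=N$ and $\mathrm{decide}(n,g,g)$; - $g=L\,\mathrm{Meet}(a,b)$ and $\mathrm{decide}(n,L\,a,d)$; - $g=L\,\mathrm{Meet}(a,b)$ and $\mathrm{decide}(n,L\,b,d)$; - $g=L\,\mathrm{Join}(a,b)$ and both $\mathrm{decide}(n,L\,a,d)$ and $\mathrm{decide}(n,L\,b,d)$; - $g=L\,\mathrm{Not}(a)$ and $\mathrm{decide}(n,R\,a,d)$; - $g=R\,\mathrm{Join}(a,b)$ and $\mathrm{decide}(n,R\,a,d)$; - $g=R\,\mathrm{Join}(a,b)$ and $\mathrm{decide}(n,R\,b,d)$; - $g=R\,\mathrm{Meet}(a,b)$ and both $\mathrm{decide}(n,R\,a,d)$ and $\mathrm{decide}(n,R\,b,d)$; - $g=R\,\mathrm{Not}(a)$ and $\mathrm{decide}(n,L\,a,d)$; - $\mathrm{decide}(n,d,g)$. *)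

theory Defs
  imports Main
begin

datatype oterm = Var nat | Meet "oterm" "oterm" | Join "oterm" "oterm" | Not "oterm"

datatype anTerm = N | L "oterm" | R "oterm"

inductive prov :: "anTerm \<Rightarrow> anTerm \<Rightarrow> bool" where
  Hyp: "prov (L a) (R a)"
| Weaken: "prov \<gamma> N \<Longrightarrow> prov \<gamma> \<delta>"
| Contract: "prov \<gamma> \<gamma> \<Longrightarrow> prov \<gamma> N"
| Swap: "prov \<gamma> \<delta> \<Longrightarrow> prov \<delta> \<gamma>"
| LeftAnd1: "prov \<gamma> (L a) \<Longrightarrow> prov \<gamma> (L (Meet a b))"
| LeftAnd2: "prov \<gamma> (L b) \<Longrightarrow> prov \<gamma> (L (Meet a b))"
| LeftOr: "prov \<gamma> (L a) \<Longrightarrow> prov \<gamma> (L b) \<Longrightarrow> prov \<gamma> (L (Join a b))"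
| LeftNot: "prov \<gamma> (R a) \<Longrightarrow> prov \<gamma> (L (Not a))"
| RightAnd: "prov \<gamma> (R a) \<Longrightarrow> prov \<gamma> (R b) \<Longrightarrow> prov \<gamma> (R (Meet a b))"
| RightOr1: "prov \<gamma> (R a) \<Longrightarrow> prov \<gamma> (R (Join a b))"
| RightOr2: "prov \<gamma> (R b) \<Longrightarrow> prov \<gamma> (R (Join a b))"
| RightNot: "prov \<gamma> (L a) \<Longrightarrow> prov \<gamma> (R (Not a))"
| Cut: "prov \<gamma> (R b) \<Longrightarrow> prov (L b) \<delta> \<Longrightarrow> prov \<gamma> \<delta>"

fun decide :: "nat \<Rightarrow> anTerm \<Rightarrow> anTerm \<Rightarrow> bool" where
  "decide 0 g d = False"
| "decide (Suc n) g d =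
    ((\<exists>a. g = L (Var a) \<and> d = R (Var a))
     \<or> decide n g N
     \<or> (d = N \<and> decide n g g)
     \<or> (\<exists>a b. g = L (Meet a b) \<and> decide n (L a) d)
     \<or> (\<exists>a b. g = L (Meet a b) \<and> decide n (L b) d)
     \<or> (\<exists>a b. g = L (Join a b) \<and> decide n (L a) d \<and> decide n (L b) d)
     \<or> (\<exists>a. g = L (Not a) \<and> decide n (R a) d)
     \<or> (\<exists>a b. g = R (Join a b) \<and> decide n (R a) d)
     \<or> (\<exists>a b. g = R (Join a b) \<and> decide n (R b) d)
     \<or> (\<exists>a b. g = R (Meet a b) \<and> decide n (R a) d \<and> decide n (R b) d)
     \<or> (\<exists>a. g = R (Not a) \<and> decide n (L a) d)
     \<or> decide n d g)"

end

theory Submission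
  imports Defs
begin

lemma sw: "prov a b \<Longrightarrow> prov b a" by (rule Swap)

theorem mainTheorem2:
  fixes n :: nat and g d :: anTerm
  assumes "decide n g d"
  shows "prov g d"
  using assms
proof (induction n arbitrary: g d)
  case 0 then show ?case by simp
next
  case (Suc n)
  from Suc.prems show ?case
    apply simp
    apply (elim disjE exE conjE)
    apply (auto intro: prov.intros sw Suc.IH)
    apply (meson sw LeftAnd1 Suc.IH)
    apply (meson sw LeftAnd2 Suc.IH)
    apply (meson sw LeftOr Suc.IH)
    apply (meson sw LeftNot Suc.IH)
    apply (meson sw RightOr1 Suc.IH)
    apply (meson sw RightOr2 Suc.IH)
    apply (meson sw RightAnd Suc.IH)
    apply (meson sw RightNot Suc.IH)
    done
qed

end
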